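(* Let $k$ be a positive integer and let $G=G_1*_k G_2$ where, for each $i=1,2$, either $G_i=K_1$ or $\tau(G_i)=\overline{\tau}(G_i)=\kappa'(G_i)=\overline{\kappa'}(G_i)=k$. Then $\tau(G)=\overline{\tau}(G)=\kappa'(G)=\overline{\kappa'}(G)=k$.
   Context: Graphs are finite, loopless, possibly with multiple edges. $\kappa'(G)$ is the edge connectivity; $\tau(G)$ is the maximum number of edge-disjoint spanning trees of a connected graph $G$ ($\tau(K_1)=\infty$). $\overline{\kappa'}(G)=\max\{\kappa'(H): H\subseteq G\}$ and $\overline{\tau}(G)=\max\{\tau(H): H\subseteq G\}$, maxima over subgraphs. For vertex-disjoint connected graphs $G_1,G_2$ and a set $K$ of $k$ edges each having one end in $V(G_1)$ and the other in $V(G_2)$, the $k$-edge-join $G_1*_k G_2$ is the graph with vertex set $V(G_1)\cup V(G_2)$ and edge set $E(G_1)\cup E(G_2)\cup K$. *)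

theory Defs
  imports Main "HOL-Library.Extended_Nat"
begin

text \<open>Multigraphs: a global incidence map inc assigns to each edge its ordered pair of
ends; a graph is a pair (V, E) of a vertex set and an edge set.\<close>

type_synonym ('v,'e) graph = "'v set \<times> 'e set"

definition wf_graph :: "('e \<Rightarrow> 'v \<times> 'v) \<Rightarrow> ('v,'e) graph \<Rightarrow> bool" where
  "wf_graph inc G \<longleftrightarrow> finite (fst G) \<and> finite (snd G) \<and>
     (\<forall>e\<in>snd G. fst (inc e) \<in> fst G \<and> snd (inc e) \<in> fst G \<and> fst (inc e) \<noteq> snd (inc e))"

definition adj :: "('e \<Rightarrow> 'v \<times> 'v) \<Rightarrow> 'e set \<Rightarrow> ('v \<times> 'v) set" where
  "adj inc E = {(u,v). \<exists>e\<in>E. inc e = (u,v) \<or> inc e = (v,u)}"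

definition connected_graph :: "('e \<Rightarrow> 'v \<times> 'v) \<Rightarrow> ('v,'e) graph \<Rightarrow> bool" where
  "connected_graph inc G \<longleftrightarrow> fst G \<noteq> {} \<and>
     (\<forall>u\<in>fst G. \<forall>v\<in>fst G. (u,v) \<in> (adj inc (snd G))\<^sup>*)"

definition spanning_tree :: "('e \<Rightarrow> 'v \<times> 'v) \<Rightarrow> ('v,'e) graph \<Rightarrow> 'e set \<Rightarrow> bool" where
  "spanning_tree inc G T \<longleftrightarrow> T \<subseteq> snd G \<and> connected_graph inc (fst G, T) \<and>
     (\<forall>T'. T' \<subset> T \<longrightarrow> \<not> connected_graph inc (fst G, T'))"

text \<open>Maximum number of edge-disjoint spanning trees (infinite for K_1).\<close>
definition tau :: "('e \<Rightarrow> 'v \<times> 'v) \<Rightarrow> ('v,'e) graph \<Rightarrow> enat" where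
  "tau inc G = Sup {enat k | k. \<exists>f :: nat \<Rightarrow> 'e set.
      (\<forall>i<k. spanning_tree inc G (f i)) \<and> (\<forall>i<k. \<forall>j<k. i \<noteq> j \<longrightarrow> f i \<inter> f j = {})}"

definition kappa' :: "('e \<Rightarrow> 'v \<times> 'v) \<Rightarrow> ('v,'e) graph \<Rightarrow> enat" where
  "kappa' inc G = Inf {enat (card S) | S. S \<subseteq> snd G \<and> \<not> connected_graph inc (fst G, snd G - S)}"

definition subgraph :: "('e \<Rightarrow> 'v \<times> 'v) \<Rightarrow> ('v,'e) graph \<Rightarrow> ('v,'e) graph \<Rightarrow> bool" where
  "subgraph inc H G \<longleftrightarrow> fst H \<subseteq> fst G \<and> snd H \<subseteq> snd G \<and>
     (\<forall>e\<in>snd H. fst (inc e) \<in> fst H \<and> snd (inc e) \<in> fst H)"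

definition tau_bar :: "('e \<Rightarrow> 'v \<times> 'v) \<Rightarrow> ('v,'e) graph \<Rightarrow> enat" where
  "tau_bar inc G = Sup {tau inc H | H. subgraph inc H G \<and> connected_graph inc H \<and> 2 \<le> card (fst H)}"

definition kappa'_bar :: "('e \<Rightarrow> 'v \<times> 'v) \<Rightarrow> ('v,'e) graph \<Rightarrow> enat" where
  "kappa'_bar inc G = Sup {kappa' inc H | H. subgraph inc H G \<and> 2 \<le> card (fst H)}"

definition is_K1 :: "('v,'e) graph \<Rightarrow> bool" where
  "is_K1 G \<longleftrightarrow> card (fst G) = 1 \<and> snd G = {}"

definition edge_join :: "('e \<Rightarrow> 'v \<times> 'v) \<Rightarrow> nat \<Rightarrow> ('v,'e) graph \<Rightarrow> ('v,'e) graph \<Rightarrow> 'e set \<Rightarrow> ('v,'e) graph \<Rightarrow> bool" where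
  "edge_join inc k G1 G2 K G \<longleftrightarrow>
     wf_graph inc G1 \<and> wf_graph inc G2 \<and> connected_graph inc G1 \<and> connected_graph inc G2 \<and>
     fst G1 \<inter> fst G2 = {} \<and> finite K \<and> card K = k \<and>
     K \<inter> snd G1 = {} \<and> K \<inter> snd G2 = {} \<and>
     (\<forall>e\<in>K. (fst (inc e) \<in> fst G1 \<and> snd (inc e) \<in> fst G2) \<or>
              (fst (inc e) \<in> fst G2 \<and> snd (inc e) \<in> fst G1)) \<and>
     G = (fst G1 \<union> fst G2, snd G1 \<union> snd G2 \<union> K)"

end

theory Submission
  imports Defs
begin

lemma adj_mono: "E \<subseteq> F \<Longrightarrow> adj inc E \<subseteq> adj inc F"
  unfolding adj_def by blast

lemma rt_mono: "E \<subseteq> F \<Longrightarrow> (adj inc E)\<^sup>* \<subseteq> (adj inc F)\<^sup>*"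
  by (intro rtrancl_mono adj_mono)

lemma conn_mono: assumes "connected_graph inc (V,E)" "E \<subseteq> F" shows "connected_graph inc (V,F)"
proof -
  have m: "(adj inc E)\<^sup>* \<subseteq> (adj inc F)\<^sup>*" by (rule rt_mono[OF assms(2)])
  show ?thesis using assms(1) m unfolding connected_graph_def fst_conv snd_conv by blast
qed

lemma adj_sym: "(u,v) \<in> adj inc E \<Longrightarrow> (v,u) \<in> adj inc E"
  unfolding adj_def by blast

lemma rt_sym: "(u,v) \<in> (adj inc E)\<^sup>* \<Longrightarrow> (v,u) \<in> (adj inc E)\<^sup>*"
proof (induction rule: rtrancl_induct)
  case base then show ?case by simp
next
  case (step y z)
  then show ?case using adj_sym converse_rtrancl_into_rtrancl by metis
qed

lemma edge_adj: "e \<in> F \<Longrightarrow> inc e = (a,b) \<or> inc e = (b,a) \<Longrightarrow> (a,b) \<in> adj inc F"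
  unfolding adj_def by blast

lemma bridge:
  assumes "connected_graph inc (A,F1)" "F1 \<subseteq> F" "connected_graph inc (B,F2)" "F2 \<subseteq> F"
    "e \<in> F" "inc e = (a,b) \<or> inc e = (b,a)" "a \<in> A" "b \<in> B"
  shows "connected_graph inc (A \<union> B, F)"
proof -
  have c1: "\<forall>u\<in>A. \<forall>v\<in>A. (u,v) \<in> (adj inc F1)\<^sup>*" using assms(1) unfolding connected_graph_def by simp
  have c2: "\<forall>u\<in>B. \<forall>v\<in>B. (u,v) \<in> (adj inc F2)\<^sup>*" using assms(3) unfolding connected_graph_def by simp
  have m1: "(adj inc F1)\<^sup>* \<subseteq> (adj inc F)\<^sup>*" by (rule rt_mono[OF assms(2)])
  have m2: "(adj inc F2)\<^sup>* \<subseteq> (adj inc F)\<^sup>*" by (rule rt_mono[OF assms(4)])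
  have ba: "(b,a) \<in> adj inc F" by (rule edge_adj[OF assms(5)]) (use assms(6) in auto)
  have toa: "(x,a) \<in> (adj inc F)\<^sup>*" if "x \<in> A \<union> B" for x
  proof (cases "x \<in> A")
    case True
    then have "(x,a) \<in> (adj inc F1)\<^sup>*" using c1 assms(7) by blast
    then show ?thesis using m1 by blast
  next
    case False
    then have "x \<in> B" using that by blast
    then have "(x,b) \<in> (adj inc F2)\<^sup>*" using c2 assms(8) by blast
    then have "(x,b) \<in> (adj inc F)\<^sup>*" using m2 by blast
    then show ?thesis using ba by (rule rtrancl_into_rtrancl)
  qed
  have all: "\<forall>u\<in>A \<union> B. \<forall>v\<in>A \<union> B. (u,v) \<in> (adj inc F)\<^sup>*"
  proof (intro ballI)
    fix u v assume "u \<in> A \<union> B" "v \<in> A \<union> B"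
    show "(u,v) \<in> (adj inc F)\<^sup>*"
      using toa[OF \<open>u \<in> A \<union> B\<close>] rt_sym[OF toa[OF \<open>v \<in> A \<union> B\<close>]] by (rule rtrancl_trans)
  qed
  have "A \<union> B \<noteq> {}" using assms(7) by blast
  then show ?thesis unfolding connected_graph_def using all by simp
qed

lemma K1_conn: assumes "card A = 1" shows "connected_graph inc (A,F)"
proof -
  obtain x where "A = {x}" using assms card_1_singletonE by blast
  then show ?thesis unfolding connected_graph_def by simp
qed

lemma noncross:
  assumes "\<forall>e\<in>E. (fst (inc e) \<in> A \<longleftrightarrow> snd (inc e) \<in> A)"
    "(u,v) \<in> (adj inc E)\<^sup>*" "u \<in> A"
  shows "v \<in> A"
  using assms(2,3)
proof (induction rule: rtrancl_induct)
  case base then show ?case .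
next
  case (step y z)
  then obtain e where "e \<in> E" "inc e = (y,z) \<or> inc e = (z,y)" unfolding adj_def by blast
  then show ?case using assms(1) step by force
qed

lemma span_exists:
  assumes "finite T" "connected_graph inc (V,T)" "T \<subseteq> E"
  shows "\<exists>T'\<subseteq>T. spanning_tree inc (V,E) T'"
proof -
  obtain T' where T': "T' \<subseteq> T \<and> connected_graph inc (V,T')"
    and min: "\<forall>T''. T'' \<subseteq> T \<and> connected_graph inc (V,T'') \<longrightarrow> card T' \<le> card T''"
    using ex_has_least_nat[where P="\<lambda>T'. T' \<subseteq> T \<and> connected_graph inc (V,T')" and m=card, of T] assms by blast
  have nc: "\<forall>T''. T'' \<subset> T' \<longrightarrow> \<not> connected_graph inc (V,T'')"
  proof (intro allI impI notI)
    fix T'' assume a: "T'' \<subset> T'" "connected_graph inc (V,T'')"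
    then have "card T'' < card T'" using T' assms(1) by (meson psubset_card_mono rev_finite_subset)
    moreover have "card T' \<le> card T''" using min T' a by blast
    ultimately show False by simp
  qed
  have "T' \<subseteq> E" using T' assms(3) by blast
  then have st: "spanning_tree inc (V,E) T'" unfolding spanning_tree_def fst_conv snd_conv using T' nc by blast
  then show ?thesis using T' by blast
qed

lemma trees_le_cut:
  assumes fin: "finite (snd H)" and ST: "\<forall>i<n. spanning_tree inc H (f i)"
    and D: "\<forall>i<n. \<forall>j<n. i \<noteq> j \<longrightarrow> f i \<inter> f j = {}"
    and S: "S \<subseteq> snd H" "\<not> connected_graph inc (fst H, snd H - S)"
  shows "n \<le> card S"
proof (rule ccontr)
  assume ns: "\<not> n \<le> card S"
  have "\<exists>i<n. f i \<inter> S = {}"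
  proof (rule ccontr)
    assume "\<not> ?thesis"
    then have "\<forall>i<n. \<exists>x. x \<in> f i \<inter> S" by blast
    then obtain g where g: "\<forall>i<n. g i \<in> f i \<inter> S" by metis
    have "inj_on g {..<n}"
    proof (rule inj_onI)
      fix i j assume ij: "i \<in> {..<n}" "j \<in> {..<n}" "g i = g j"
      show "i = j"
      proof (rule ccontr)
        assume "i \<noteq> j"
        then have "f i \<inter> f j = {}" using D ij by simp
        moreover have "g i \<in> f i" "g j \<in> f j" using g ij by auto
        ultimately show False using ij(3) by auto
      qed
    qed
    moreover have "g ` {..<n} \<subseteq> S" using g by auto
    ultimately have "card {..<n} \<le> card S" using card_inj_on_le fin S(1) finite_subset by metis
    then show False using ns by simp
  qed
  then obtain i where "i<n" "f i \<inter> S = {}" by blast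
  then have "f i \<subseteq> snd H - S" "connected_graph inc (fst H, f i)" using ST unfolding spanning_tree_def by auto
  then show False using conn_mono S(2) by blast
qed

lemma tau_le_kappa: assumes fin: "finite (snd H)" shows "tau inc H \<le> kappa' inc H"
  unfolding tau_def kappa'_def
proof (rule Sup_least, rule Inf_greatest)
  fix x y
  assume "x \<in> {enat k |k. \<exists>f. (\<forall>i<k. spanning_tree inc H (f i)) \<and> (\<forall>i<k. \<forall>j<k. i \<noteq> j \<longrightarrow> f i \<inter> f j = {})}"
  then obtain n f where x: "x = enat n" and ST: "\<forall>i<n. spanning_tree inc H (f i)"
    and D: "\<forall>i<n. \<forall>j<n. i \<noteq> j \<longrightarrow> f i \<inter> f j = {}" by blast
  assume "y \<in> {enat (card S) |S. S \<subseteq> snd H \<and> \<not> connected_graph inc (fst H, snd H - S)}"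
  then obtain S where y: "y = enat (card S)" and S: "S \<subseteq> snd H" "\<not> connected_graph inc (fst H, snd H - S)" by blast
  have "n \<le> card S" by (rule trees_le_cut[OF fin ST D S])
  then show "x \<le> y" using x y by simp
qed

lemma Sup_enat_attain:
  assumes "Sup {enat n | n. P n} = enat k" "0 < k"
  shows "P k"
proof -
  let ?A = "{enat n | n. P n}"
  have d: "Sup ?A = (if ?A = {} then 0 else if finite ?A then Max ?A else \<infinity>)" by (rule Sup_enat_def)
  have ne: "?A \<noteq> {}"
  proof
    assume "?A = {}"
    then have "Sup ?A = 0" by (simp add: bot_enat_def)
    with assms show False by (simp add: zero_enat_def)
  qed
  have fin: "finite ?A"
  proof (rule ccontr)
    assume "infinite ?A"
    then have "Sup ?A = \<infinity>" using ne by (simp only: d if_False)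
    with assms show False by simp
  qed
  have "Max ?A = enat k" using assms(1) ne fin by (simp only: d if_False if_True)
  moreover have "Max ?A \<in> ?A" using fin ne by (rule Max_in)
  ultimately show ?thesis by auto
qed

lemma side_trees:
  fixes inc :: "'e \<Rightarrow> 'v \<times> 'v" and G1 :: "('v,'e) graph"
  assumes "is_K1 G1 \<or> tau inc G1 = enat k" "0 < k"
  shows "\<exists>f. (\<forall>i<k. f i \<subseteq> snd G1 \<and> connected_graph inc (fst G1, f i)) \<and>
             (\<forall>i<k. \<forall>j<k. i \<noteq> j \<longrightarrow> f i \<inter> f j = {})"
proof (cases "is_K1 G1")
  case True
  then have "card (fst G1) = 1" unfolding is_K1_def by simp
  then have "connected_graph inc (fst G1, {})" by (rule K1_conn)
  then have "\<forall>i<k. {} \<subseteq> snd G1 \<and> connected_graph inc (fst G1, {})" by simp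
  then show ?thesis by (intro exI[of _ "\<lambda>_. {}"]) simp
next
  case False
  then have "tau inc G1 = enat k" using assms by simp
  then have "\<exists>f :: nat \<Rightarrow> 'e set. (\<forall>i<k. spanning_tree inc G1 (f i)) \<and> (\<forall>i<k. \<forall>j<k. i \<noteq> j \<longrightarrow> f i \<inter> f j = {})"
    using Sup_enat_attain[where P="\<lambda>n. \<exists>f :: nat \<Rightarrow> 'e set. (\<forall>i<n. spanning_tree inc G1 (f i)) \<and> (\<forall>i<n. \<forall>j<n. i \<noteq> j \<longrightarrow> f i \<inter> f j = {})", OF _ assms(2)]
    unfolding tau_def by blast
  then obtain f :: "nat \<Rightarrow> 'e set" where f: "\<forall>i<k. spanning_tree inc G1 (f i)" "\<forall>i<k. \<forall>j<k. i \<noteq> j \<longrightarrow> f i \<inter> f j = {}"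
    by blast
  have "\<forall>i<k. f i \<subseteq> snd G1 \<and> connected_graph inc (fst G1, f i)"
    using f(1) by (simp add: spanning_tree_def)
  then show ?thesis using f(2) by blast
qed

lemma side_conn:
  assumes "is_K1 G1 \<or> kappa' inc G1 = enat k" "card (S \<inter> snd G1) < k"
  shows "connected_graph inc (fst G1, snd G1 - S)"
proof (cases "is_K1 G1")
  case True
  then have "card (fst G1) = 1" unfolding is_K1_def by simp
  then show ?thesis by (rule K1_conn)
next
  case False
  show ?thesis
  proof (rule ccontr)
    assume nc: "\<not> ?thesis"
    have eq: "snd G1 - (S \<inter> snd G1) = snd G1 - S" by blast
    have "enat (card (S \<inter> snd G1)) \<in> {enat (card S) | S. S \<subseteq> snd G1 \<and> \<not> connected_graph inc (fst G1, snd G1 - S)}"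
      using nc eq by (metis (mono_tags, lifting) inf_le2 mem_Collect_eq)
    then have "kappa' inc G1 \<le> enat (card (S \<inter> snd G1))" unfolding kappa'_def by (rule Inf_lower)
    then show False using False assms by simp
  qed
qed

lemma edge_join_sym:
  assumes "edge_join inc k G1 G2 K G"
  shows "edge_join inc k G2 G1 K G"
proof -
  have a: "wf_graph inc G1" "wf_graph inc G2" "connected_graph inc G1" "connected_graph inc G2"
     "fst G1 \<inter> fst G2 = {}" "finite K" "card K = k"
     "K \<inter> snd G1 = {}" "K \<inter> snd G2 = {}"
     "\<forall>e\<in>K. (fst (inc e) \<in> fst G1 \<and> snd (inc e) \<in> fst G2) \<or>
              (fst (inc e) \<in> fst G2 \<and> snd (inc e) \<in> fst G1)"
     "G = (fst G1 \<union> fst G2, snd G1 \<union> snd G2 \<union> K)"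
    using assms unfolding edge_join_def by blast+
  have b: "fst G2 \<inter> fst G1 = {}" using a(5) by blast
  have c: "\<forall>e\<in>K. (fst (inc e) \<in> fst G2 \<and> snd (inc e) \<in> fst G1) \<or>
              (fst (inc e) \<in> fst G1 \<and> snd (inc e) \<in> fst G2)" using a(10) by blast
  have d: "G = (fst G2 \<union> fst G1, snd G2 \<union> snd G1 \<union> K)"
    using a(11) by (metis Un_commute)
  show ?thesis unfolding edge_join_def using a b c d by blast
qed

lemma sub_one_side:
  assumes ej: "edge_join inc k G1 G2 K G" and H: "subgraph inc H G" "2 \<le> card (fst H)" "fst H \<subseteq> fst G1"
    and side: "is_K1 G1 \<or> kappa'_bar inc G1 = enat k"
  shows "kappa' inc H \<le> enat k"
proof -
  have wf1: "wf_graph inc G1" and wf2: "wf_graph inc G2" and disj: "fst G1 \<inter> fst G2 = {}"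
    and Kc: "\<forall>e\<in>K. (fst (inc e) \<in> fst G1 \<and> snd (inc e) \<in> fst G2) \<or>
              (fst (inc e) \<in> fst G2 \<and> snd (inc e) \<in> fst G1)"
    and Geq: "G = (fst G1 \<union> fst G2, snd G1 \<union> snd G2 \<union> K)"
    using ej unfolding edge_join_def by blast+
  have "snd H \<subseteq> snd G1"
  proof
    fix e assume e: "e \<in> snd H"
    then have ends: "fst (inc e) \<in> fst G1" "snd (inc e) \<in> fst G1" using H(1,3) unfolding subgraph_def by auto
    have "e \<in> snd G1 \<union> snd G2 \<union> K" using e H(1) Geq unfolding subgraph_def by (metis snd_conv subsetD)
    moreover have "e \<notin> snd G2" using wf2 ends disj unfolding wf_graph_def by blast
    moreover have "e \<notin> K" using Kc ends disj by blast
    ultimately show "e \<in> snd G1" by blast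
  qed
  then have sub: "subgraph inc H G1" using H unfolding subgraph_def by blast
  have "finite (fst G1)" using wf1 unfolding wf_graph_def by blast
  then have "card (fst H) \<le> card (fst G1)" using H(3) by (rule card_mono)
  then have "\<not> is_K1 G1" using H(2) unfolding is_K1_def by simp
  then have kb: "kappa'_bar inc G1 = enat k" using side by simp
  have "kappa' inc H \<in> {kappa' inc H | H. subgraph inc H G1 \<and> 2 \<le> card (fst H)}"
    using sub H(2) by blast
  then have "kappa' inc H \<le> kappa'_bar inc G1" unfolding kappa'_bar_def by (rule Sup_upper)
  then show ?thesis using kb by simp
qed

theorem lemma3p8:
  fixes inc :: "'e \<Rightarrow> 'v \<times> 'v" and k :: nat and G1 G2 G :: "('v,'e) graph" and K :: "'e set"
  assumes "0 < k"
    and "edge_join inc k G1 G2 K G"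
    and "is_K1 G1 \<or> (tau inc G1 = enat k \<and> tau_bar inc G1 = enat k \<and>
                     kappa' inc G1 = enat k \<and> kappa'_bar inc G1 = enat k)"
    and "is_K1 G2 \<or> (tau inc G2 = enat k \<and> tau_bar inc G2 = enat k \<and>
                     kappa' inc G2 = enat k \<and> kappa'_bar inc G2 = enat k)"
  shows "tau inc G = enat k \<and> tau_bar inc G = enat k \<and>
         kappa' inc G = enat k \<and> kappa'_bar inc G = enat k"
proof -
  note ej = assms(2)
  have wf1: "wf_graph inc G1" and wf2: "wf_graph inc G2" and c1: "connected_graph inc G1"
    and c2: "connected_graph inc G2" and disj: "fst G1 \<inter> fst G2 = {}" and finK: "finite K"
    and cardK: "card K = k" and K1: "K \<inter> snd G1 = {}" and K2: "K \<inter> snd G2 = {}"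
    and Kc: "\<forall>e\<in>K. (fst (inc e) \<in> fst G1 \<and> snd (inc e) \<in> fst G2) \<or>
              (fst (inc e) \<in> fst G2 \<and> snd (inc e) \<in> fst G1)"
    and Geq: "G = (fst G1 \<union> fst G2, snd G1 \<union> snd G2 \<union> K)"
    using ej unfolding edge_join_def by blast+
  have VG: "fst G = fst G1 \<union> fst G2" and EG: "snd G = snd G1 \<union> snd G2 \<union> K" using Geq by simp_all
  have fV1: "finite (fst G1)" and fE1: "finite (snd G1)"
    and e1: "\<forall>e\<in>snd G1. fst (inc e) \<in> fst G1 \<and> snd (inc e) \<in> fst G1"
    using wf1 unfolding wf_graph_def by blast+
  have fV2: "finite (fst G2)" and fE2: "finite (snd G2)"
    and e2: "\<forall>e\<in>snd G2. fst (inc e) \<in> fst G2 \<and> snd (inc e) \<in> fst G2"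
    using wf2 unfolding wf_graph_def by blast+
  have ne1: "fst G1 \<noteq> {}" using c1 unfolding connected_graph_def by blast
  have ne2: "fst G2 \<noteq> {}" using c2 unfolding connected_graph_def by blast
  have fE: "finite (snd G)" using EG fE1 fE2 finK by simp
  have E12: "snd G1 \<inter> snd G2 = {}" using e1 e2 disj by blast
  have orient: "\<exists>a b. a \<in> fst G1 \<and> b \<in> fst G2 \<and> (inc e = (a,b) \<or> inc e = (b,a))" if "e \<in> K" for e
  proof -
    have "(fst (inc e) \<in> fst G1 \<and> snd (inc e) \<in> fst G2) \<or> (fst (inc e) \<in> fst G2 \<and> snd (inc e) \<in> fst G1)"
      using Kc that by blast
    then show ?thesis
    proof
      assume h: "fst (inc e) \<in> fst G1 \<and> snd (inc e) \<in> fst G2"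
      show ?thesis by (rule exI[of _ "fst (inc e)"], rule exI[of _ "snd (inc e)"]) (simp add: h)
    next
      assume h: "fst (inc e) \<in> fst G2 \<and> snd (inc e) \<in> fst G1"
      show ?thesis by (rule exI[of _ "snd (inc e)"], rule exI[of _ "fst (inc e)"]) (simp add: h)
    qed
  qed
  have subGG: "subgraph inc G G"
    unfolding subgraph_def using e1 e2 Kc VG EG by auto
  have cardV: "2 \<le> card (fst G)"
  proof -
    have "card (fst G) = card (fst G1) + card (fst G2)" using VG fV1 fV2 disj by (simp add: card_Un_disjoint)
    moreover have "card (fst G1) \<ge> 1" using fV1 ne1 by (simp add: Suc_le_eq card_gt_0_iff)
    moreover have "card (fst G2) \<ge> 1" using fV2 ne2 by (simp add: Suc_le_eq card_gt_0_iff)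
    ultimately show ?thesis by simp
  qed
  have ej2: "edge_join inc k G2 G1 K G" using ej by (rule edge_join_sym)
  have s1: "is_K1 G1 \<or> kappa'_bar inc G1 = enat k" using assms(3) by blast
  have s2: "is_K1 G2 \<or> kappa'_bar inc G2 = enat k" using assms(4) by blast
  have kH: "kappa' inc H \<le> enat k" if H: "subgraph inc H G" "2 \<le> card (fst H)" for H
  proof (cases "fst H \<subseteq> fst G1")
    case True
    then show ?thesis using sub_one_side[OF ej H True s1] by simp
  next
    case F1: False
    show ?thesis
    proof (cases "fst H \<subseteq> fst G2")
      case True
      then show ?thesis using sub_one_side[OF ej2 H True s2] by simp
    next
      case F2: False
      have HV: "fst H \<subseteq> fst G" and HE: "snd H \<subseteq> snd G" using H(1) unfolding subgraph_def by blast+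
      obtain v where v: "v \<in> fst H" "v \<in> fst G2" using F1 HV VG by blast
      obtain u where u: "u \<in> fst H" "u \<in> fst G1" using F2 HV VG by blast
      let ?S = "snd H \<inter> K"
      have nc: "\<not> connected_graph inc (fst H, snd H - ?S)"
      proof
        assume "connected_graph inc (fst H, snd H - ?S)"
        then have pth: "(u,v) \<in> (adj inc (snd H - ?S))\<^sup>*" using u v unfolding connected_graph_def by simp
        have ncr: "\<forall>e\<in>snd H - ?S. (fst (inc e) \<in> fst G1 \<longleftrightarrow> snd (inc e) \<in> fst G1)"
        proof
          fix e assume "e \<in> snd H - ?S"
          then have "e \<in> snd G1 \<or> e \<in> snd G2" using HE EG by blast
          then show "(fst (inc e) \<in> fst G1 \<longleftrightarrow> snd (inc e) \<in> fst G1)" using e1 e2 disj by blast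
        qed
        have "v \<in> fst G1" by (rule noncross[OF ncr pth u(2)])
        then show False using v(2) disj by blast
      qed
      have "enat (card ?S) \<in> {enat (card S) | S. S \<subseteq> snd H \<and> \<not> connected_graph inc (fst H, snd H - S)}"
        using nc by blast
      then have "kappa' inc H \<le> enat (card ?S)" unfolding kappa'_def by (rule Inf_lower)
      moreover have "card ?S \<le> k" using cardK finK by (metis card_mono inf_le2)
      ultimately show ?thesis by (simp add: order_trans)
    qed
  qed
  have kG_le: "kappa' inc G \<le> enat k" using kH subGG cardV by blast
  have sc1: "is_K1 G1 \<or> kappa' inc G1 = enat k" using assms(3) by blast
  have sc2: "is_K1 G2 \<or> kappa' inc G2 = enat k" using assms(4) by blast
  have kG_ge: "enat k \<le> kappa' inc G"
    unfolding kappa'_def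
  proof (rule Inf_greatest)
    fix x assume "x \<in> {enat (card S) | S. S \<subseteq> snd G \<and> \<not> connected_graph inc (fst G, snd G - S)}"
    then obtain S where S: "x = enat (card S)" "S \<subseteq> snd G" "\<not> connected_graph inc (fst G, snd G - S)" by blast
    show "enat k \<le> x"
    proof (rule ccontr)
      assume "\<not> enat k \<le> x"
      then have lt: "card S < k" using S(1) by simp
      have fS: "finite S" using S(2) fE by (rule finite_subset)
      have l1: "card (S \<inter> snd G1) < k" using lt fS by (meson card_mono inf_le1 le_less_trans)
      have l2: "card (S \<inter> snd G2) < k" using lt fS by (meson card_mono inf_le1 le_less_trans)
      have l3: "card (S \<inter> K) < card K" using lt fS cardK by (meson card_mono inf_le1 le_less_trans)
      have "\<not> K \<subseteq> S"
      proof
        assume "K \<subseteq> S"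
        then have "S \<inter> K = K" by blast
        then show False using l3 by simp
      qed
      then obtain e where e: "e \<in> K" "e \<notin> S" by blast
      obtain a b where ab: "a \<in> fst G1" "b \<in> fst G2" "inc e = (a,b) \<or> inc e = (b,a)" using orient[OF e(1)] by blast
      have cc1: "connected_graph inc (fst G1, snd G1 - S)" by (rule side_conn[OF sc1 l1])
      have cc2: "connected_graph inc (fst G2, snd G2 - S)" by (rule side_conn[OF sc2 l2])
      have "connected_graph inc (fst G1 \<union> fst G2, snd G - S)"
        by (rule bridge[OF cc1 _ cc2 _ _ ab(3) ab(1) ab(2)]) (use EG e in blast)+
      then show False using S(3) VG by simp
    qed
  qed
  have kG: "kappa' inc G = enat k" using kG_le kG_ge by simp
  have st1: "is_K1 G1 \<or> tau inc G1 = enat k" using assms(3) by blast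
  have st2: "is_K1 G2 \<or> tau inc G2 = enat k" using assms(4) by blast
  obtain f1 where f1: "\<forall>i<k. f1 i \<subseteq> snd G1 \<and> connected_graph inc (fst G1, f1 i)"
     "\<forall>i<k. \<forall>j<k. i \<noteq> j \<longrightarrow> f1 i \<inter> f1 j = {}" using side_trees[OF st1 assms(1)] by blast
  obtain f2 where f2: "\<forall>i<k. f2 i \<subseteq> snd G2 \<and> connected_graph inc (fst G2, f2 i)"
     "\<forall>i<k. \<forall>j<k. i \<noteq> j \<longrightarrow> f2 i \<inter> f2 j = {}" using side_trees[OF st2 assms(1)] by blast
  obtain h where h: "bij_betw h {0..<card K} K" using ex_bij_betw_nat_finite[OF finK] by blast
  have hK: "h i \<in> K" if "i < k" for i using h that cardK unfolding bij_betw_def by auto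
  have hinj0: "inj_on h {0..<k}" using h cardK by (simp add: bij_betw_def)
  have hinj: "h i \<noteq> h j" if "i < k" "j < k" "i \<noteq> j" for i j
  proof
    assume eq: "h i = h j"
    have "i \<in> {0..<k}" "j \<in> {0..<k}" using that by auto
    then have "i = j" using inj_onD[OF hinj0 eq] by simp
    then show False using that(3) by simp
  qed
  define T where "T i = f1 i \<union> f2 i \<union> {h i}" for i
  have Tsub: "T i \<subseteq> snd G" if "i < k" for i
  proof -
    have a: "f1 i \<subseteq> snd G1" using f1(1) that by simp
    have b: "f2 i \<subseteq> snd G2" using f2(1) that by simp
    have c: "h i \<in> K" using hK that by simp
    show ?thesis unfolding T_def EG using a b c by blast
  qed
  have Tconn: "connected_graph inc (fst G, T i)" if ik: "i < k" for i
  proof -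
    obtain a b where ab: "a \<in> fst G1" "b \<in> fst G2" "inc (h i) = (a,b) \<or> inc (h i) = (b,a)"
      using orient[OF hK[OF ik]] by blast
    have cc1: "connected_graph inc (fst G1, f1 i)" using f1(1) ik by blast
    have cc2: "connected_graph inc (fst G2, f2 i)" using f2(1) ik by blast
    have "connected_graph inc (fst G1 \<union> fst G2, T i)"
      by (rule bridge[OF cc1 _ cc2 _ _ ab(3) ab(1) ab(2)]) (auto simp: T_def)
    then show ?thesis using VG by simp
  qed
  have Tdisj: "T i \<inter> T j = {}" if "i < k" "j < k" "i \<noteq> j" for i j
  proof -
    have "f1 i \<inter> f1 j = {}" "f2 i \<inter> f2 j = {}" using f1(2) f2(2) that by blast+
    moreover have "f1 i \<subseteq> snd G1" "f1 j \<subseteq> snd G1" "f2 i \<subseteq> snd G2" "f2 j \<subseteq> snd G2"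
      using f1(1) f2(1) that by blast+
    moreover have "h i \<in> K" "h j \<in> K" "h i \<noteq> h j" using hK hinj that by blast+
    ultimately show ?thesis unfolding T_def using E12 K1 K2 by blast
  qed
  have "\<forall>i<k. \<exists>T'. T' \<subseteq> T i \<and> spanning_tree inc G T'"
  proof (intro allI impI)
    fix i assume i: "i < k"
    have "finite (T i)" using Tsub[OF i] fE by (rule finite_subset)
    then have "\<exists>T'\<subseteq>T i. spanning_tree inc (fst G, snd G) T'" using span_exists Tconn[OF i] Tsub[OF i] by blast
    then show "\<exists>T'. T' \<subseteq> T i \<and> spanning_tree inc G T'" by simp
  qed
  then obtain g where g: "\<forall>i<k. g i \<subseteq> T i \<and> spanning_tree inc G (g i)" by metis
  have gd: "\<forall>i<k. \<forall>j<k. i \<noteq> j \<longrightarrow> g i \<inter> g j = {}"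
  proof (intro allI impI)
    fix i j assume "i < k" "j < k" "i \<noteq> j"
    then show "g i \<inter> g j = {}" using Tdisj[of i j] g by blast
  qed
  have "enat k \<in> {enat n | n. \<exists>f :: nat \<Rightarrow> 'e set.
      (\<forall>i<n. spanning_tree inc G (f i)) \<and> (\<forall>i<n. \<forall>j<n. i \<noteq> j \<longrightarrow> f i \<inter> f j = {})}"
    using g gd by blast
  then have tG_ge: "enat k \<le> tau inc G" unfolding tau_def by (rule Sup_upper)
  have tG_le: "tau inc G \<le> kappa' inc G" using fE by (rule tau_le_kappa)
  have tG: "tau inc G = enat k" using tG_ge tG_le kG by simp
  have cG: "connected_graph inc G" using Tconn[OF assms(1)] Tsub[OF assms(1)] conn_mono[of inc "fst G" "T 0" "snd G"] by simp
  have "tau inc G \<in> {tau inc H | H. subgraph inc H G \<and> connected_graph inc H \<and> 2 \<le> card (fst H)}"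
    using subGG cG cardV by blast
  then have tb_ge: "tau inc G \<le> tau_bar inc G" unfolding tau_bar_def by (rule Sup_upper)
  have tb_le: "tau_bar inc G \<le> enat k" unfolding tau_bar_def
  proof (rule Sup_least)
    fix x assume "x \<in> {tau inc H | H. subgraph inc H G \<and> connected_graph inc H \<and> 2 \<le> card (fst H)}"
    then obtain H where H: "x = tau inc H" "subgraph inc H G" "2 \<le> card (fst H)" by blast
    have "snd H \<subseteq> snd G" using H(2) unfolding subgraph_def by blast
    then have "finite (snd H)" using fE by (rule finite_subset)
    then have "tau inc H \<le> kappa' inc H" by (rule tau_le_kappa)
    also have "\<dots> \<le> enat k" using kH H(2,3) by blast
    finally show "x \<le> enat k" using H(1) by simp
  qed
  have tb: "tau_bar inc G = enat k" using tb_ge tb_le tG by simp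
  have "kappa' inc G \<in> {kappa' inc H | H. subgraph inc H G \<and> 2 \<le> card (fst H)}"
    using subGG cardV by blast
  then have kb_ge: "kappa' inc G \<le> kappa'_bar inc G" unfolding kappa'_bar_def by (rule Sup_upper)
  have kb_le: "kappa'_bar inc G \<le> enat k" unfolding kappa'_bar_def
  proof (rule Sup_least)
    fix x assume "x \<in> {kappa' inc H | H. subgraph inc H G \<and> 2 \<le> card (fst H)}"
    then obtain H where H: "x = kappa' inc H" "subgraph inc H G" "2 \<le> card (fst H)" by blast
    then show "x \<le> enat k" using kH by blast
  qed
  have kb: "kappa'_bar inc G = enat k" using kb_ge kb_le kG by simp
  show ?thesis using tG tb kG kb by blast
qed

end
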